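(* Let $\Sigma$ be a finite alphabet, $b\in\Sigma$, $\Gamma=\Sigma\setminus\{b\}$, $L\subseteq\Gamma^+$, and let $\psi$ be a $\mathsf{BE}$ formula over $\Gamma$ such that $L_{act}(\psi)=L$. Then there are $\mathsf{BE}$ formulas (over $\Sigma$) defining, under the action-based semantics, the languages $bL$, $\Sigma^*bL$, $\Sigma^*b(L+\varepsilon)$, $Lb$, $Lb\Sigma^*$, $(L+\varepsilon)b\Sigma^*$, and $bLb$.
   Context: $\Sigma^*$ ($\Sigma^+$) denotes the set of (non-empty) finite words over $\Sigma$, $\varepsilon$ the empty word, concatenation of languages is written by juxtaposition and $L+\varepsilon$ denotes $L\cup\{\varepsilon\}$. For $w=w(0)\cdots w(n)$, $\mathrm{Pref}(w)=\{w(0)\cdots w(i)\mid0\le i\le n-1\}$ and $\mathrm{Suff}(w)=\{w(i)\cdots w(n)\mid1\le i\le n\}$. $\mathsf{BE}$ formulas over an alphabet $\Delta$: $\psi::=a\mid\neg\psi\mid\psi\wedge\psi\mid\langle B\rangle\psi\mid\langle E\rangle\psi$ with $a\in\Delta$; each denotes a language $L_{act}(\psi)\subseteq\Delta^+$: $L_{act}(a)=a^+$, $L_{act}(\neg\psi)=\Delta^+\setminus L_{act}(\psi)$, $L_{act}(\psi_1\wedge\psi_2)=L_{act}(\psi_1)\cap L_{act}(\psi_2)$, $L_{act}(\langle B\rangle\psi)=\{w\in\Delta^+\mid\mathrm{Pref}(w)\cap L_{act}(\psi)\neq\emptyset\}$, $L_{act}(\langle E\rangle\psi)=\{w\in\Delta^+\mid\mathrm{Suff}(w)\cap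 L_{act}(\psi)\neq\emptyset\}$. A formula over $\Gamma\subseteq\Sigma$ is also regarded as a formula over $\Sigma$ when the alphabet is $\Sigma$; a formula $\varphi$ over $\Sigma$ defines a language $M$ if $L_{act}(\varphi)=M$ with $\Delta=\Sigma$. *)

theory Defs
  imports Main
begin

datatype 'a be = Atom 'a | Neg "'a be" | Conj "'a be" "'a be" | DiaB "'a be" | DiaE "'a be"

fun atoms :: "'a be \<Rightarrow> 'a set" where
  "atoms (Atom a) = {a}"
| "atoms (Neg p) = atoms p"
| "atoms (Conj p q) = atoms p \<union> atoms q"
| "atoms (DiaB p) = atoms p"
| "atoms (DiaE p) = atoms p"

definition plus_words :: "'a set \<Rightarrow> 'a list set" where
  "plus_words D = {w. w \<noteq> [] \<and> set w \<subseteq> D}"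

definition Pref :: "'a list \<Rightarrow> 'a list set" where
  "Pref w = {take i w | i. 1 \<le> i \<and> i < length w}"

definition Suff :: "'a list \<Rightarrow> 'a list set" where
  "Suff w = {drop i w | i. 1 \<le> i \<and> i < length w}"

fun lact :: "'a set \<Rightarrow> 'a be \<Rightarrow> 'a list set" where
  "lact D (Atom a) = {w. w \<noteq> [] \<and> set w \<subseteq> {a}}"
| "lact D (Neg p) = plus_words D - lact D p"
| "lact D (Conj p q) = lact D p \<inter> lact D q"
| "lact D (DiaB p) = {w \<in> plus_words D. Pref w \<inter> lact D p \<noteq> {}}"
| "lact D (DiaE p) = {w \<in> plus_words D. Suff w \<inter> lact D p \<noteq> {}}"

definition defines_lang :: "'a set \<Rightarrow> 'a be \<Rightarrow> 'a list set \<Rightarrow> bool" where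
  "defines_lang S \<phi> M \<longleftrightarrow> atoms \<phi> \<subseteq> S \<and> lact S \<phi> = M"

definition conc :: "'a list set \<Rightarrow> 'a list set \<Rightarrow> 'a list set" where
  "conc A B = {u @ v | u v. u \<in> A \<and> v \<in> B}"

end

theory Submission
  imports Defs
begin

lemma Pref_sub: "w \<in> plus_words D \<Longrightarrow> Pref w \<subseteq> plus_words D"
  by (auto simp: Pref_def plus_words_def dest: in_set_takeD)

lemma Suff_sub: "w \<in> plus_words D \<Longrightarrow> Suff w \<subseteq> plus_words D"
  by (auto simp: Suff_def plus_words_def dest: in_set_dropD)

lemma lact_sub: "atoms \<phi> \<subseteq> D \<Longrightarrow> lact D \<phi> \<subseteq> plus_words D"
  by (induction \<phi>) (auto simp: plus_words_def)

lemma plus_words_mono: "G \<subseteq> D \<Longrightarrow> plus_words G \<subseteq> plus_words D"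
  by (auto simp: plus_words_def)

lemma lact_restrict: "G \<subseteq> D \<Longrightarrow> atoms \<psi> \<subseteq> G \<Longrightarrow> lact D \<psi> \<inter> plus_words G = lact G \<psi>"
proof (induction \<psi>)
  case (Atom x)
  then show ?case by (auto simp: plus_words_def)
next
  case (Neg \<psi>)
  then show ?case using plus_words_mono[OF Neg(2)] by auto
next
  case (Conj \<psi>1 \<psi>2)
  then show ?case by auto
next
  case (DiaB \<psi>)
  have eq: "\<And>w. w \<in> plus_words G \<Longrightarrow> Pref w \<inter> lact D \<psi> = Pref w \<inter> lact G \<psi>"
  proof -
    have IH: "lact D \<psi> \<inter> plus_words G = lact G \<psi>" using DiaB by simp
    fix w assume "w \<in> plus_words G"
    then show "Pref w \<inter> lact D \<psi> = Pref w \<inter> lact G \<psi>" using IH Pref_sub[of w G] by blast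
  qed
  show ?case using plus_words_mono[OF DiaB(2)] eq by auto
next
  case (DiaE \<psi>)
  have eq: "\<And>w. w \<in> plus_words G \<Longrightarrow> Suff w \<inter> lact D \<psi> = Suff w \<inter> lact G \<psi>"
  proof -
    have IH: "lact D \<psi> \<inter> plus_words G = lact G \<psi>" using DiaE by simp
    fix w assume "w \<in> plus_words G"
    then show "Suff w \<inter> lact D \<psi> = Suff w \<inter> lact G \<psi>" using IH Suff_sub[of w G] by blast
  qed
  show ?case using plus_words_mono[OF DiaE(2)] eq by auto
qed

definition TT :: "'a \<Rightarrow> 'a be" where "TT b = Neg (Conj (Atom b) (Neg (Atom b)))"
definition Or :: "'a be \<Rightarrow> 'a be \<Rightarrow> 'a be" where "Or p q = Neg (Conj (Neg p) (Neg q))"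
definition long :: "'a \<Rightarrow> 'a be" where "long b = DiaB (TT b)"
definition one :: "'a \<Rightarrow> 'a be" where "one b = Neg (long b)"
definition Beq :: "'a be \<Rightarrow> 'a be" where "Beq p = Or p (DiaB p)"
definition Eeq :: "'a be \<Rightarrow> 'a be" where "Eeq p = Or p (DiaE p)"
definition SB :: "'a \<Rightarrow> 'a be" where "SB b = Beq (Conj (Atom b) (one b))"
definition EB :: "'a \<Rightarrow> 'a be" where "EB b = Eeq (Conj (Atom b) (one b))"
definition SBL :: "'a \<Rightarrow> 'a be" where "SBL b = Conj (SB b) (long b)"

lemma lact_TT: "lact D (TT b) = plus_words D"
  by (auto simp: TT_def)

lemma lact_Or: "lact D p \<subseteq> plus_words D \<Longrightarrow> lact D q \<subseteq> plus_words D \<Longrightarrow>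
   lact D (Or p q) = lact D p \<union> lact D q"
  by (auto simp: Or_def)

lemma Pref_ne: "Pref w \<noteq> {} \<longleftrightarrow> 2 \<le> length w"
proof -
  have "Pref w \<noteq> {} \<longleftrightarrow> (\<exists>i. 1 \<le> i \<and> i < length w)" by (auto simp: Pref_def)
  also have "\<dots> \<longleftrightarrow> 2 \<le> length w" by (auto intro: exI[of _ 1])
  finally show ?thesis .
qed

lemma lact_long: "lact D (long b) = {w \<in> plus_words D. 2 \<le> length w}"
proof -
  have "lact D (long b) = {w \<in> plus_words D. Pref w \<inter> plus_words D \<noteq> {}}"
    by (simp add: long_def lact_TT)
  also have "\<dots> = {w \<in> plus_words D. Pref w \<noteq> {}}" using Pref_sub by blast
  also have "\<dots> = {w \<in> plus_words D. 2 \<le> length w}" by (simp add: Pref_ne)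
  finally show ?thesis .
qed

lemma lact_one: "lact D (one b) = {w \<in> plus_words D. length w = 1}"
  apply (auto simp: one_def lact_long plus_words_def)
  by (case_tac x; auto simp: Suc_le_eq)

lemma lact_Beq: "lact D p \<subseteq> plus_words D \<Longrightarrow>
  lact D (Beq p) = {w \<in> plus_words D. \<exists>i. 1 \<le> i \<and> i \<le> length w \<and> take i w \<in> lact D p}"
proof -
  assume s: "lact D p \<subseteq> plus_words D"
  have "lact D (DiaB p) \<subseteq> plus_words D" by auto
  then have e: "lact D (Beq p) = lact D p \<union> lact D (DiaB p)" using s by (simp add: Beq_def lact_Or)
  show ?thesis
  proof (rule set_eqI, rule iffI)
    fix w assume "w \<in> lact D (Beq p)"
    then show "w \<in> {w \<in> plus_words D. \<exists>i. 1 \<le> i \<and> i \<le> length w \<and> take i w \<in> lact D p}"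
      unfolding e using s
      apply (auto simp: Pref_def)
       apply (rule_tac x="length w" in exI)
      by (force simp: plus_words_def Suc_le_eq)
  next
    fix w assume "w \<in> {w \<in> plus_words D. \<exists>i. 1 \<le> i \<and> i \<le> length w \<and> take i w \<in> lact D p}"
    then obtain i where w: "w \<in> plus_words D" "1 \<le> i" "i \<le> length w" "take i w \<in> lact D p" by auto
    show "w \<in> lact D (Beq p)"
    proof (cases "i = length w")
      case True then show ?thesis using w unfolding e by auto
    next
      case False
      then have "take i w \<in> Pref w" using w unfolding Pref_def by auto
      then show ?thesis using w unfolding e by auto
    qed
  qed
qed

lemma lact_Eeq: "lact D p \<subseteq> plus_words D \<Longrightarrow>
  lact D (Eeq p) = {w \<in> plus_words D. \<exists>i. i < length w \<and> drop i w \<in> lact D p}"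
proof -
  assume s: "lact D p \<subseteq> plus_words D"
  have "lact D (DiaE p) \<subseteq> plus_words D" by auto
  then have e: "lact D (Eeq p) = lact D p \<union> lact D (DiaE p)" using s by (simp add: Eeq_def lact_Or)
  show ?thesis
  proof (rule set_eqI, rule iffI)
    fix w assume "w \<in> lact D (Eeq p)"
    then show "w \<in> {w \<in> plus_words D. \<exists>i. i < length w \<and> drop i w \<in> lact D p}"
      unfolding e using s
      apply (auto simp: Suff_def)
      apply (rule_tac x="0" in exI) apply (auto simp: plus_words_def)
      done
  next
    fix w assume "w \<in> {w \<in> plus_words D. \<exists>i. i < length w \<and> drop i w \<in> lact D p}"
    then obtain i where w: "w \<in> plus_words D" "i < length w" "drop i w \<in> lact D p" by auto
    show "w \<in> lact D (Eeq p)"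
    proof (cases "i = 0")
      case True then show ?thesis using w unfolding e by auto
    next
      case False
      then have "drop i w \<in> Suff w" using w unfolding Suff_def by auto
      then show ?thesis using w unfolding e by auto
    qed
  qed
qed


lemma lact_b1: "b \<in> D \<Longrightarrow> lact D (Conj (Atom b) (one b)) = {[b]}"
  apply (rule set_eqI)
  apply (auto simp: lact_one plus_words_def length_Suc_conv)
  done

lemma b1_sub: "b \<in> D \<Longrightarrow> lact D (Conj (Atom b) (one b)) \<subseteq> plus_words D"
  unfolding lact_b1 by (simp add: plus_words_def)

lemma lact_SB: "b \<in> D \<Longrightarrow> lact D (SB b) = {w \<in> plus_words D. hd w = b}"
proof -
  assume b: "b \<in> D"
  have "lact D (SB b) = {w \<in> plus_words D. \<exists>i. 1 \<le> i \<and> i \<le> length w \<and> take i w = [b]}"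
    unfolding SB_def lact_Beq[OF b1_sub[OF b]] lact_b1[OF b] by simp
  also have "\<dots> = {w \<in> plus_words D. hd w = b}"
  proof (rule set_eqI, rule iffI)
    fix w assume "w \<in> {w \<in> plus_words D. \<exists>i. 1 \<le> i \<and> i \<le> length w \<and> take i w = [b]}"
    then obtain i where "w \<in> plus_words D" "1 \<le> i" "take i w = [b]" by auto
    then show "w \<in> {w \<in> plus_words D. hd w = b}"
      by (cases w; cases i; auto simp: plus_words_def)
  next
    fix w assume "w \<in> {w \<in> plus_words D. hd w = b}"
    then show "w \<in> {w \<in> plus_words D. \<exists>i. 1 \<le> i \<and> i \<le> length w \<and> take i w = [b]}"
      by (cases w; auto simp: plus_words_def intro!: exI[of _ 1])
  qed
  finally show ?thesis .
qed

lemma lact_EB: "b \<in> D \<Longrightarrow> lact D (EB b) = {w \<in> plus_words D. last w = b}"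
proof -
  assume b: "b \<in> D"
  have "lact D (EB b) = {w \<in> plus_words D. \<exists>i. i < length w \<and> drop i w = [b]}"
    unfolding EB_def lact_Eeq[OF b1_sub[OF b]] lact_b1[OF b] by simp
  also have "\<dots> = {w \<in> plus_words D. last w = b}"
  proof (rule set_eqI, rule iffI)
    fix w assume "w \<in> {w \<in> plus_words D. \<exists>i. i < length w \<and> drop i w = [b]}"
    then obtain i where "w \<in> plus_words D" "drop i w = [b]" by auto
    then show "w \<in> {w \<in> plus_words D. last w = b}"
    proof -
      assume a: "w \<in> plus_words D" "drop i w = [b]"
      have "w = take i w @ [b]" using append_take_drop_id[of i w] a(2) by simp
      then have "last w = b" by (metis last_snoc)
      then show ?thesis using a by simp
    qed
  next
    fix w assume w: "w \<in> {w \<in> plus_words D. last w = b}"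
    then have "w \<noteq> []" by (auto simp: plus_words_def)
    then have "drop (length w - 1) w = [last w]"
      by (cases w rule: rev_cases) auto
    then show "w \<in> {w \<in> plus_words D. \<exists>i. i < length w \<and> drop i w = [b]}"
      using w \<open>w \<noteq> []\<close> by (auto intro!: exI[of _ "length w - 1"])
  qed
  finally show ?thesis .
qed

lemma lact_SBL: "b \<in> D \<Longrightarrow> w \<in> lact D (SBL b) \<longleftrightarrow> (\<exists>u. w = b # u \<and> u \<in> plus_words D)"
  unfolding SBL_def
  by (cases w) (auto simp: lact_SB lact_long plus_words_def Suc_le_eq)

lemma drop_take_nth: "k < length w \<Longrightarrow> drop k (take (Suc k) w) = [w ! k]"
  by (simp add: take_Suc_conv_app_nth)

lemma lact_hasB: "b \<in> D \<Longrightarrow> lact D (Beq (Eeq (Atom b))) = {w \<in> plus_words D. b \<in> set w}"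
proof -
  assume b: "b \<in> D"
  have s1: "lact D (Atom b) \<subseteq> plus_words D" using b by (auto simp: plus_words_def)
  have s2: "lact D (Eeq (Atom b)) \<subseteq> plus_words D" using lact_Eeq[OF s1] by auto
  show ?thesis
  proof (rule set_eqI, rule iffI)
    fix w assume "w \<in> lact D (Beq (Eeq (Atom b)))"
    then obtain i j where w: "w \<in> plus_words D" "drop j (take i w) \<noteq> []"
       "set (drop j (take i w)) \<subseteq> {b}"
      unfolding lact_Beq[OF s2] lact_Eeq[OF s1] by auto
    have "hd (drop j (take i w)) \<in> set (drop j (take i w))" using w(2) by (rule hd_in_set)
    then have "hd (drop j (take i w)) = b" using w(3) by blast
    then have "b \<in> set (drop j (take i w))" using w(2) hd_in_set by metis
    then show "w \<in> {w \<in> plus_words D. b \<in> set w}" using w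
      by (auto dest: in_set_dropD in_set_takeD)
  next
    fix w assume "w \<in> {w \<in> plus_words D. b \<in> set w}"
    then obtain k where w: "w \<in> plus_words D" "k < length w" "w ! k = b"
      by (auto simp: in_set_conv_nth)
    have "take (Suc k) w \<in> lact D (Eeq (Atom b))"
      unfolding lact_Eeq[OF s1] using w drop_take_nth[OF w(2)]
      by (auto simp: plus_words_def dest: in_set_takeD intro!: exI[of _ k])
    then show "w \<in> lact D (Beq (Eeq (Atom b)))"
      unfolding lact_Beq[OF s2] using w by (auto intro!: exI[of _ "Suc k"])
  qed
qed

lemma Pref_Cons: "Pref (b # u) = {b # take j u | j. j < length u}"
proof (rule set_eqI, rule iffI)
  fix x assume "x \<in> Pref (b # u)"
  then obtain i where "1 \<le> i" "i < Suc (length u)" "x = take i (b # u)" by (auto simp: Pref_def)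
  then show "x \<in> {b # take j u | j. j < length u}"
    by (cases i) auto
next
  fix x assume "x \<in> {b # take j u | j. j < length u}"
  then obtain j where "j < length u" "x = b # take j u" by auto
  then show "x \<in> Pref (b # u)" unfolding Pref_def
    by (auto intro!: exI[of _ "Suc j"])
qed

lemma Suff_Cons: "Suff (b # u) = {drop j u | j. j < length u}"
proof (rule set_eqI, rule iffI)
  fix x assume "x \<in> Suff (b # u)"
  then obtain i where "1 \<le> i" "i < Suc (length u)" "x = drop i (b # u)" by (auto simp: Suff_def)
  then show "x \<in> {drop j u | j. j < length u}"
    by (cases i) auto
next
  fix x assume "x \<in> {drop j u | j. j < length u}"
  then obtain j where "j < length u" "x = drop j u" by auto
  then show "x \<in> Suff (b # u)" unfolding Suff_def
    by (auto intro!: exI[of _ "Suc j"])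
qed

lemma Suff_drop: "Suff (drop j u) \<subseteq> Suff u"
proof
  fix x assume "x \<in> Suff (drop j u)"
  then obtain k where k: "1 \<le> k" "k < length (drop j u)" "x = drop k (drop j u)"
    unfolding Suff_def by auto
  then have "x = drop (k + j) u" "1 \<le> k + j" "k + j < length u" by auto
  then show "x \<in> Suff u" unfolding Suff_def by blast
qed


lemma Cons_plus: "b \<in> D \<Longrightarrow> u \<in> plus_words D \<Longrightarrow> b # u \<in> plus_words D"
  by (simp add: plus_words_def)

fun tb :: "'a \<Rightarrow> 'a be \<Rightarrow> 'a be" where
  "tb b (Atom a) = Conj (SBL b) (Neg (DiaE (Neg (Atom a))))"
| "tb b (Neg p) = Conj (SBL b) (Neg (tb b p))"
| "tb b (Conj p q) = Conj (tb b p) (tb b q)"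
| "tb b (DiaB p) = Conj (SBL b) (DiaB (tb b p))"
| "tb b (DiaE p) = Conj (SBL b) (DiaE (DiaE p))"

lemma atoms_SBL: "atoms (SBL b) = {b}"
  by (simp add: SBL_def SB_def Beq_def Or_def one_def long_def TT_def)

lemma atoms_tb: "atoms (tb b \<phi>) \<subseteq> insert b (atoms \<phi>)"
  by (induction \<phi>) (auto simp: atoms_SBL)

lemma lact_tb: "atoms \<phi> \<subseteq> D \<Longrightarrow> b \<in> D \<Longrightarrow>
  w \<in> lact D (tb b \<phi>) \<longleftrightarrow> (\<exists>u. w = b # u \<and> u \<in> lact D \<phi>)"
proof (induction \<phi> arbitrary: w)
  case (Atom a)
  have aD: "a \<in> D" using Atom by simp
  have "w \<in> lact D (tb b (Atom a)) \<longleftrightarrow> (\<exists>u. w = b # u \<and> u \<in> plus_words D \<and>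
      Suff (b # u) \<inter> (plus_words D - lact D (Atom a)) = {})"
    using lact_SBL[OF Atom(2)] Atom(2) by (auto simp: plus_words_def)
  also have "\<dots> \<longleftrightarrow> (\<exists>u. w = b # u \<and> u \<in> lact D (Atom a))"
  proof (intro iff_exI conj_cong refl)
    fix u
    show "(u \<in> plus_words D \<and> Suff (b # u) \<inter> (plus_words D - lact D (Atom a)) = {})
       \<longleftrightarrow> u \<in> lact D (Atom a)"
    proof
      assume h: "u \<in> plus_words D \<and> Suff (b # u) \<inter> (plus_words D - lact D (Atom a)) = {}"
      then have "u \<in> Suff (b # u)" unfolding Suff_Cons by (auto simp: plus_words_def intro!: exI[of _ 0])
      then show "u \<in> lact D (Atom a)" using h by blast
    next
      assume h: "u \<in> lact D (Atom a)"
      then have "u \<in> plus_words D" using aD by (auto simp: plus_words_def)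
      moreover have "Suff (b # u) \<subseteq> lact D (Atom a)" unfolding Suff_Cons using h
        by (auto dest: in_set_dropD)
      ultimately show "u \<in> plus_words D \<and> Suff (b # u) \<inter> (plus_words D - lact D (Atom a)) = {}"
        by blast
    qed
  qed
  finally show ?case .
next
  case (Neg p)
  have IH: "\<And>w. w \<in> lact D (tb b p) \<longleftrightarrow> (\<exists>u. w = b # u \<and> u \<in> lact D p)" using Neg by simp
  show ?case using lact_SBL[OF Neg(3)] IH Cons_plus[OF Neg(3)] by auto
next
  case (Conj p q)
  have IH1: "\<And>w. w \<in> lact D (tb b p) \<longleftrightarrow> (\<exists>u. w = b # u \<and> u \<in> lact D p)" using Conj by simp
  have IH2: "\<And>w. w \<in> lact D (tb b q) \<longleftrightarrow> (\<exists>u. w = b # u \<and> u \<in> lact D q)" using Conj by simp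
  show ?case using IH1 IH2 by auto
next
  case (DiaB p)
  have IH: "\<And>w. w \<in> lact D (tb b p) \<longleftrightarrow> (\<exists>u. w = b # u \<and> u \<in> lact D p)" using DiaB by simp
  have sp: "lact D p \<subseteq> plus_words D" using DiaB lact_sub by simp
  have key: "Pref (b # u) \<inter> lact D (tb b p) \<noteq> {} \<longleftrightarrow> Pref u \<inter> lact D p \<noteq> {}" for u
  proof
    assume "Pref (b # u) \<inter> lact D (tb b p) \<noteq> {}"
    then obtain j where j: "j < length u" "take j u \<in> lact D p"
      unfolding Pref_Cons using IH by auto
    then have "take j u \<noteq> []" using sp by (auto simp: plus_words_def)
    then have "1 \<le> j" by (cases j) auto
    then show "Pref u \<inter> lact D p \<noteq> {}" using j unfolding Pref_def by blast
  next
    assume "Pref u \<inter> lact D p \<noteq> {}"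
    then obtain j where j: "j < length u" "take j u \<in> lact D p"
      unfolding Pref_def by auto
    then show "Pref (b # u) \<inter> lact D (tb b p) \<noteq> {}" unfolding Pref_Cons using IH by blast
  qed
  show ?case using lact_SBL[OF DiaB(3)] key Cons_plus[OF DiaB(3)]
    by (simp only: tb.simps lact.simps Int_iff mem_Collect_eq) blast
next
  case (DiaE p)
  have key: "Suff (b # u) \<inter> lact D (DiaE p) \<noteq> {} \<longleftrightarrow> Suff u \<inter> lact D p \<noteq> {}"
    if u: "u \<in> plus_words D" for u
  proof
    assume "Suff (b # u) \<inter> lact D (DiaE p) \<noteq> {}"
    then obtain j where "Suff (drop j u) \<inter> lact D p \<noteq> {}"
      unfolding Suff_Cons by auto
    then show "Suff u \<inter> lact D p \<noteq> {}" using Suff_drop[of j u] by blast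
  next
    assume "Suff u \<inter> lact D p \<noteq> {}"
    moreover have "u \<in> Suff (b # u)" using u unfolding Suff_Cons
      by (auto simp: plus_words_def intro!: exI[of _ 0])
    ultimately show "Suff (b # u) \<inter> lact D (DiaE p) \<noteq> {}" using u by auto
  qed
  have "w \<in> lact D (tb b (DiaE p)) \<longleftrightarrow>
     w \<in> lact D (SBL b) \<and> w \<in> plus_words D \<and> Suff w \<inter> lact D (DiaE p) \<noteq> {}"
    by (simp only: tb.simps lact.simps(3) lact.simps(5) Int_iff mem_Collect_eq)
  also have "\<dots> \<longleftrightarrow> (\<exists>u. w = b # u \<and> u \<in> plus_words D \<and> Suff (b # u) \<inter> lact D (DiaE p) \<noteq> {})"
    using lact_SBL[OF DiaE(3)] Cons_plus[OF DiaE(3)] by (auto simp del: lact.simps)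
  also have "\<dots> \<longleftrightarrow> (\<exists>u. w = b # u \<and> u \<in> plus_words D \<and> Suff u \<inter> lact D p \<noteq> {})"
    by (rule iff_exI, rule conj_cong, rule refl, rule conj_cong, rule refl, rule key, assumption)
  also have "\<dots> \<longleftrightarrow> (\<exists>u. w = b # u \<and> u \<in> lact D (DiaE p))" by simp
  finally show ?case .
qed

fun mir :: "'a be \<Rightarrow> 'a be" where
  "mir (Atom a) = Atom a"
| "mir (Neg p) = Neg (mir p)"
| "mir (Conj p q) = Conj (mir p) (mir q)"
| "mir (DiaB p) = DiaE (mir p)"
| "mir (DiaE p) = DiaB (mir p)"

lemma atoms_mir: "atoms (mir \<phi>) = atoms \<phi>"
  by (induction \<phi>) auto

lemma Pref_rev: "Pref (rev w) = rev ` Suff w"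
proof (rule set_eqI, rule iffI)
  fix x assume "x \<in> Pref (rev w)"
  then obtain i where i: "1 \<le> i" "i < length w" "x = take i (rev w)" by (auto simp: Pref_def)
  then have "x = rev (drop (length w - i) w)" by (simp add: take_rev)
  moreover have "drop (length w - i) w \<in> Suff w" using i unfolding Suff_def by force
  ultimately show "x \<in> rev ` Suff w" by blast
next
  fix x assume "x \<in> rev ` Suff w"
  then obtain i where i: "1 \<le> i" "i < length w" "x = rev (drop i w)" by (auto simp: Suff_def)
  then have x: "x = take (length w - i) (rev w)" by (simp add: rev_drop)
  have "1 \<le> length w - i" "length w - i < length (rev w)" using i by auto
  then show "x \<in> Pref (rev w)" using x unfolding Pref_def by blast
qed

lemma Suff_rev: "Suff (rev w) = rev ` Pref w"
proof (rule set_eqI, rule iffI)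
  fix x assume "x \<in> Suff (rev w)"
  then obtain i where i: "1 \<le> i" "i < length w" "x = drop i (rev w)" by (auto simp: Suff_def)
  then have "x = rev (take (length w - i) w)" by (simp add: drop_rev)
  moreover have "take (length w - i) w \<in> Pref w" using i unfolding Pref_def by force
  ultimately show "x \<in> rev ` Pref w" by blast
next
  fix x assume "x \<in> rev ` Pref w"
  then obtain i where i: "1 \<le> i" "i < length w" "x = rev (take i w)" by (auto simp: Pref_def)
  then have x: "x = drop (length w - i) (rev w)" by (simp add: rev_take)
  have "1 \<le> length w - i" "length w - i < length (rev w)" using i by auto
  then show "x \<in> Suff (rev w)" using x unfolding Suff_def by blast
qed

lemma plus_rev: "rev w \<in> plus_words D \<longleftrightarrow> w \<in> plus_words D"
  by (simp add: plus_words_def)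

lemma lact_mir: "w \<in> lact D (mir \<phi>) \<longleftrightarrow> rev w \<in> lact D \<phi>"
proof (induction \<phi> arbitrary: w)
  case (DiaB p)
  have "Suff w \<inter> lact D (mir p) \<noteq> {} \<longleftrightarrow> Pref (rev w) \<inter> lact D p \<noteq> {}"
    unfolding Pref_rev using DiaB by auto
  then show ?case by (simp add: plus_rev)
next
  case (DiaE p)
  have "Pref w \<inter> lact D (mir p) \<noteq> {} \<longleftrightarrow> Suff (rev w) \<inter> lact D p \<noteq> {}"
    unfolding Suff_rev using DiaE by auto
  then show ?case by (simp add: plus_rev)
qed (auto simp: plus_rev)



lemma conc_lists: "T \<subseteq> plus_words D \<Longrightarrow>
  {w \<in> plus_words D. \<exists>i<length w. drop i w \<in> T} = conc (lists D) T"
proof (rule set_eqI, rule iffI)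
  fix w assume T: "T \<subseteq> plus_words D" and "w \<in> {w \<in> plus_words D. \<exists>i<length w. drop i w \<in> T}"
  then obtain i where w: "w \<in> plus_words D" "drop i w \<in> T" by auto
  have "take i w \<in> lists D" using w(1) by (auto simp: plus_words_def dest: in_set_takeD)
  moreover have "w = take i w @ drop i w" by simp
  ultimately show "w \<in> conc (lists D) T" unfolding conc_def using w(2) by blast
next
  fix w assume T: "T \<subseteq> plus_words D" and "w \<in> conc (lists D) T"
  then obtain x v where w: "w = x @ v" "x \<in> lists D" "v \<in> T" unfolding conc_def by auto
  then have v: "v \<in> plus_words D" using T by auto
  then have "w \<in> plus_words D" using w by (auto simp: plus_words_def)
  moreover have "length x < length w" "drop (length x) w = v" using w v by (auto simp: plus_words_def)
  ultimately show "w \<in> {w \<in> plus_words D. \<exists>i<length w. drop i w \<in> T}" using w(3) by auto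
qed

lemma conc_single: "conc {[b]} M = (#) b ` M"
  by (auto simp: conc_def)

lemma partA:
  assumes "atoms \<phi> \<subseteq> D" "b \<in> D"
  shows "defines_lang D (tb b \<phi>) (conc {[b]} (lact D \<phi>))"
    and "defines_lang D (Eeq (tb b \<phi>)) (conc (lists D) (conc {[b]} (lact D \<phi>)))"
    and "defines_lang D (Or (Eeq (tb b \<phi>)) (EB b)) (conc (lists D) (conc {[b]} (insert [] (lact D \<phi>))))"
proof -
  have at: "atoms (tb b \<phi>) \<subseteq> D" using atoms_tb[of b \<phi>] assms by auto
  have T: "lact D (tb b \<phi>) = conc {[b]} (lact D \<phi>)"
    unfolding conc_single using lact_tb[OF assms] by auto
  have Ts: "lact D (tb b \<phi>) \<subseteq> plus_words D" by (rule lact_sub[OF at])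
  show "defines_lang D (tb b \<phi>) (conc {[b]} (lact D \<phi>))"
    unfolding defines_lang_def using at T by simp
  have E: "lact D (Eeq (tb b \<phi>)) = conc (lists D) (conc {[b]} (lact D \<phi>))"
    by (subst lact_Eeq[OF Ts], subst conc_lists[OF Ts], subst T, rule refl)
  have atE: "atoms (Eeq (tb b \<phi>)) \<subseteq> D" using at by (simp add: Eeq_def Or_def)
  show "defines_lang D (Eeq (tb b \<phi>)) (conc (lists D) (conc {[b]} (lact D \<phi>)))"
    unfolding defines_lang_def using atE E by simp
  have atB: "atoms (EB b) \<subseteq> D" using assms by (simp add: EB_def Eeq_def Or_def one_def long_def TT_def)
  have Es: "lact D (Eeq (tb b \<phi>)) \<subseteq> plus_words D" by (rule lact_sub[OF atE])
  have Bs: "lact D (EB b) \<subseteq> plus_words D" by (rule lact_sub[OF atB])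
  have EBl: "lact D (EB b) = conc (lists D) {[b]}"
    unfolding lact_EB[OF assms(2)]
  proof (rule set_eqI, rule iffI)
    fix w assume "w \<in> {w \<in> plus_words D. last w = b}"
    then show "w \<in> conc (lists D) {[b]}" unfolding conc_def plus_words_def
      by (cases w rule: rev_cases) auto
  next
    fix w assume "w \<in> conc (lists D) {[b]}"
    then show "w \<in> {w \<in> plus_words D. last w = b}" using assms(2)
      unfolding conc_def plus_words_def by auto
  qed
  have "conc (lists D) (conc {[b]} (insert [] (lact D \<phi>))) =
     conc (lists D) (conc {[b]} (lact D \<phi>)) \<union> conc (lists D) {[b]}"
    unfolding conc_def by blast
  then have O: "lact D (Or (Eeq (tb b \<phi>)) (EB b)) = conc (lists D) (conc {[b]} (insert [] (lact D \<phi>)))"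
    using lact_Or[OF Es Bs] E EBl by simp
  show "defines_lang D (Or (Eeq (tb b \<phi>)) (EB b)) (conc (lists D) (conc {[b]} (insert [] (lact D \<phi>))))"
    unfolding defines_lang_def using O atE atB by (simp add: Or_def)
qed



lemma rev_img: "x \<in> rev ` S \<longleftrightarrow> rev x \<in> S"
proof
  assume "x \<in> rev ` S" then obtain y where "x = rev y" "y \<in> S" by blast
  then show "rev x \<in> S" by simp
next
  assume "rev x \<in> S"
  then show "x \<in> rev ` S" using image_eqI[of x rev "rev x" S] by simp
qed

lemma rev_lists: "rev ` lists D = lists D"
  by (rule set_eqI) (simp add: rev_img in_lists_conv_set)

lemma lact_mir_img: "lact D (mir \<phi>) = rev ` lact D \<phi>"
  by (rule set_eqI) (simp add: rev_img lact_mir)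

lemma defines_mir: "defines_lang D \<phi> M \<Longrightarrow> defines_lang D (mir \<phi>) (rev ` M)"
  unfolding defines_lang_def by (simp add: atoms_mir lact_mir_img)


lemma rev_conc: "rev ` conc A B = conc (rev ` B) (rev ` A)"
proof (rule set_eqI)
  fix x
  show "x \<in> rev ` conc A B \<longleftrightarrow> x \<in> conc (rev ` B) (rev ` A)"
  proof
    assume "x \<in> rev ` conc A B"
    then obtain u v where uv: "x = rev (u @ v)" "u \<in> A" "v \<in> B" unfolding conc_def by blast
    then have "x = rev v @ rev u" by simp
    moreover have "rev v \<in> rev ` B" "rev u \<in> rev ` A" using uv by auto
    ultimately show "x \<in> conc (rev ` B) (rev ` A)" unfolding conc_def by blast
  next
    assume "x \<in> conc (rev ` B) (rev ` A)"
    then obtain p q where pq: "x = rev p @ rev q" "p \<in> B" "q \<in> A" unfolding conc_def by blast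
    then have "x = rev (q @ p)" by simp
    moreover have "q @ p \<in> conc A B" using pq unfolding conc_def by blast
    ultimately show "x \<in> rev ` conc A B" by blast
  qed
qed

lemma conc_assoc: "conc (conc A B) C = conc A (conc B C)"
proof (rule set_eqI, rule iffI)
  fix w assume "w \<in> conc (conc A B) C"
  then obtain x y z where e: "w = (x @ y) @ z" and h: "x \<in> A" "y \<in> B" "z \<in> C"
    unfolding conc_def by blast
  have "y @ z \<in> conc B C" using h unfolding conc_def by blast
  moreover have "w = x @ (y @ z)" using e by simp
  ultimately show "w \<in> conc A (conc B C)" using h unfolding conc_def by blast
next
  fix w assume "w \<in> conc A (conc B C)"
  then obtain x y z where e: "w = x @ (y @ z)" and h: "x \<in> A" "y \<in> B" "z \<in> C"
    unfolding conc_def by blast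
  have "x @ y \<in> conc A B" using h unfolding conc_def by blast
  moreover have "w = (x @ y) @ z" using e by simp
  ultimately show "w \<in> conc (conc A B) C" using h unfolding conc_def by blast
qed

lemma rev_rev_img: "rev ` rev ` L = L"
  by (simp add: image_image)

theorem lemma4p3:
  fixes \<Sigma> :: "'a set" and b :: 'a and L :: "'a list set" and \<psi> :: "'a be"
  assumes "finite \<Sigma>" and "b \<in> \<Sigma>"
    and "L \<subseteq> plus_words (\<Sigma> - {b})"
    and "atoms \<psi> \<subseteq> \<Sigma> - {b}"
    and "lact (\<Sigma> - {b}) \<psi> = L"
  shows "(\<exists>\<phi>. defines_lang \<Sigma> \<phi> (conc {[b]} L))
    \<and> (\<exists>\<phi>. defines_lang \<Sigma> \<phi> (conc (lists \<Sigma>) (conc {[b]} L)))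
    \<and> (\<exists>\<phi>. defines_lang \<Sigma> \<phi> (conc (lists \<Sigma>) (conc {[b]} (insert [] L))))
    \<and> (\<exists>\<phi>. defines_lang \<Sigma> \<phi> (conc L {[b]}))
    \<and> (\<exists>\<phi>. defines_lang \<Sigma> \<phi> (conc L (conc {[b]} (lists \<Sigma>))))
    \<and> (\<exists>\<phi>. defines_lang \<Sigma> \<phi> (conc (insert [] L) (conc {[b]} (lists \<Sigma>))))
    \<and> (\<exists>\<phi>. defines_lang \<Sigma> \<phi> (conc {[b]} (conc L {[b]})))"
proof -
  define \<phi>L where "\<phi>L = Conj \<psi> (Neg (Beq (Eeq (Atom b))))"
  have atL: "atoms \<phi>L \<subseteq> \<Sigma>" using assms(2,4) by (auto simp: \<phi>L_def Beq_def Eeq_def Or_def)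
  have noB: "lact \<Sigma> (Neg (Beq (Eeq (Atom b)))) = plus_words (\<Sigma> - {b})"
    using lact_hasB[OF assms(2)] by (auto simp: plus_words_def simp del: lact.simps(1))
  have LL: "lact \<Sigma> \<phi>L = L"
    using lact_restrict[of "\<Sigma> - {b}" \<Sigma> \<psi>] assms(4,5) noB by (simp add: \<phi>L_def Diff_subset)
  have dL: "defines_lang \<Sigma> \<phi>L L" using atL LL by (simp add: defines_lang_def)
  note A = partA[OF atL assms(2), unfolded LL]
  have atR: "atoms (mir \<phi>L) \<subseteq> \<Sigma>" using atL by (simp add: atoms_mir)
  have LR: "lact \<Sigma> (mir \<phi>L) = rev ` L" by (simp add: lact_mir_img LL)
  note B = partA[OF atR assms(2), unfolded LR]
  have B1: "defines_lang \<Sigma> (mir (tb b (mir \<phi>L))) (conc L {[b]})"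
    using defines_mir[OF B(1)] by (simp add: rev_conc rev_rev_img)
  have B2: "defines_lang \<Sigma> (mir (Eeq (tb b (mir \<phi>L)))) (conc L (conc {[b]} (lists \<Sigma>)))"
    using defines_mir[OF B(2)] by (simp add: rev_conc rev_rev_img rev_lists conc_assoc)
  have B3: "defines_lang \<Sigma> (mir (Or (Eeq (tb b (mir \<phi>L))) (EB b)))
      (conc (insert [] L) (conc {[b]} (lists \<Sigma>)))"
    using defines_mir[OF B(3)] by (simp add: rev_conc rev_rev_img rev_lists conc_assoc)
  have at4: "atoms (mir (tb b (mir \<phi>L))) \<subseteq> \<Sigma>" and l4: "lact \<Sigma> (mir (tb b (mir \<phi>L))) = conc L {[b]}"
    using B1 by (auto simp: defines_lang_def)
  have C: "defines_lang \<Sigma> (tb b (mir (tb b (mir \<phi>L)))) (conc {[b]} (conc L {[b]}))"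
    using partA(1)[OF at4 assms(2)] l4 by simp
  show ?thesis
    apply (intro conjI)
          apply (rule exI, rule A(1))
         apply (rule exI, rule A(2))
        apply (rule exI, rule A(3))
       apply (rule exI, rule B1)
      apply (rule exI, rule B2)
     apply (rule exI, rule B3)
    apply (rule exI, rule C)
    done
qed

end
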